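(* Let $L\ge 2$ be an integer, let $A>0$, $\alpha>0$, $\beta>0$, $\sigma_v^2>0$ be known constants, let $\varphi\in[0,2\pi)$ be an unknown parameter, and let $\psi_l=2\pi l/L$ for $l=0,\dots,L-1$. Suppose we observe $$P[l]=A\left|\alpha+\beta e^{\mathrm{j}(\psi_l+\varphi)}+v_l\right|^2,\qquad l=0,\dots,L-1,$$ where $v_0,\dots,v_{L-1}$ are i.i.d. $\mathcal{CN}(0,\sigma_v^2)$. Define $K=2\alpha\beta/(\alpha^2+\beta^2)$, $\gamma_l=\left(\alpha^2+\beta^2+2\alpha\beta\cos(\psi_l+\varphi)\right)/\sigma_v^2$, and let $\bar\gamma=\frac1L\sum_{l=0}^{L-1}\gamma_l$. Then the Cramér–Rao lower bound $\mathrm{CRLB}(\varphi)$ for estimating $\varphi$ from $P[0],\dots,P[L-1]$ (i.e. the reciprocal of the Fisher information $-\mathbb{E}\left[\partial^2\log p(P[0],\dots,P[L-1]\mid\varphi)/\partial\varphi^2\right]$) satisfies $$\frac{1}{\mathrm{CRLB}(\varphi)}=K^2\bar\gamma^{\,2}\sum_{l=0}^{L-1}\sin^2(\psi_l+\varphi)\left(\frac{1}{\gamma_l}-g(\gamma_l)\right),$$ where $$g(\gamma)=\int_0^{+\infty}\gamma t\,\exp(-\gamma(1+t))\,I_0\!\left(2\gamma\sqrt t\right)\left(1-R^2\!\left(2\gamma\sqrt t\right)\right)\mathrm{d}t .$$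
   Context: $\mathcal{CN}(0,\sigma^2)$ is the circularly-symmetric complex Gaussian distribution with variance $\sigma^2$. $I_\nu$ denotes the $\nu$-th order modified Bessel function of the first kind, and $R(z)=I_1(z)/I_0(z)$. Each $P[l]$ thus follows a scaled noncentral chi-squared distribution with two degrees of freedom, with density $\frac{1}{A\sigma_v^2}\exp\!\left(-\frac{x+\lambda_l}{A\sigma_v^2}\right)I_0\!\left(\frac{\sqrt{\lambda_l x}}{A\sigma_v^2/2}\right)$ for $x\ge0$, where $\lambda_l=A(\alpha^2+\beta^2+2\alpha\beta\cos(\psi_l+\varphi))$. The phases $\psi_l=2\pi l/L$ come from the model in which the observations are taken at equally spaced instants $t_l=lT_s/L$ of a phase ramp $\psi(t)=2\pi t/T_s$. *)

theory Defs
  imports "HOL-Analysis.Analysis"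
begin

definition bessel_I :: "nat \<Rightarrow> real \<Rightarrow> real" where
  "bessel_I n z = (\<Sum>k. (z / 2) ^ (2 * k + n) / (fact k * fact (k + n)))"

definition bessel_R :: "real \<Rightarrow> real" where
  "bessel_R z = bessel_I 1 z / bessel_I 0 z"

definition psi :: "nat \<Rightarrow> nat \<Rightarrow> real" where
  "psi L l = 2 * pi * real l / real L"

definition ncp :: "real \<Rightarrow> real \<Rightarrow> real \<Rightarrow> nat \<Rightarrow> real \<Rightarrow> nat \<Rightarrow> real" where
  "ncp A \<alpha> \<beta> L \<phi> l = A * (\<alpha>\<^sup>2 + \<beta>\<^sup>2 + 2 * \<alpha> * \<beta> * cos (psi L l + \<phi>))"

text \<open>Density of P[l] (scaled noncentral chi-squared, two degrees of freedom), zero for x < 0.\<close>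
definition obs_density ::
  "real \<Rightarrow> real \<Rightarrow> real \<Rightarrow> real \<Rightarrow> nat \<Rightarrow> real \<Rightarrow> nat \<Rightarrow> real \<Rightarrow> real" where
  "obs_density A \<alpha> \<beta> \<sigma>2 L \<phi> l x =
     (if 0 \<le> x then
        1 / (A * \<sigma>2) * exp (- (x + ncp A \<alpha> \<beta> L \<phi> l) / (A * \<sigma>2))
          * bessel_I 0 (sqrt (ncp A \<alpha> \<beta> L \<phi> l * x) / (A * \<sigma>2 / 2))
      else 0)"

definition joint_density ::
  "real \<Rightarrow> real \<Rightarrow> real \<Rightarrow> real \<Rightarrow> nat \<Rightarrow> real \<Rightarrow> (nat \<Rightarrow> real) \<Rightarrow> real" where
  "joint_density A \<alpha> \<beta> \<sigma>2 L \<phi> x = (\<Prod>l<L. obs_density A \<alpha> \<beta> \<sigma>2 L \<phi> l (x l))"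

definition fisher_info :: "real \<Rightarrow> real \<Rightarrow> real \<Rightarrow> real \<Rightarrow> nat \<Rightarrow> real \<Rightarrow> real" where
  "fisher_info A \<alpha> \<beta> \<sigma>2 L \<phi> =
     integral\<^sup>L (PiM {..<L} (\<lambda>_. lborel))
       (\<lambda>x. - deriv (deriv (\<lambda>\<theta>. ln (joint_density A \<alpha> \<beta> \<sigma>2 L \<theta> x))) \<phi>
             * joint_density A \<alpha> \<beta> \<sigma>2 L \<phi> x)"

definition CRLB :: "real \<Rightarrow> real \<Rightarrow> real \<Rightarrow> real \<Rightarrow> nat \<Rightarrow> real \<Rightarrow> real" where
  "CRLB A \<alpha> \<beta> \<sigma>2 L \<phi> = 1 / fisher_info A \<alpha> \<beta> \<sigma>2 L \<phi>"

definition snr :: "real \<Rightarrow> real \<Rightarrow> real \<Rightarrow> nat \<Rightarrow> real \<Rightarrow> nat \<Rightarrow> real" where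
  "snr \<alpha> \<beta> \<sigma>2 L \<phi> l = (\<alpha>\<^sup>2 + \<beta>\<^sup>2 + 2 * \<alpha> * \<beta> * cos (psi L l + \<phi>)) / \<sigma>2"

definition gfun :: "real \<Rightarrow> real" where
  "gfun \<gamma> = (LBINT t:{0<..}. \<gamma> * t * exp (- \<gamma> * (1 + t)) * bessel_I 0 (2 * \<gamma> * sqrt t)
                 * (1 - (bessel_R (2 * \<gamma> * sqrt t))\<^sup>2))"

end

theory Submission
  imports Defs "HOL-Probability.Probability"
begin

definition cJ :: "nat \<Rightarrow> nat \<Rightarrow> real" where
  "cJ m k = 1 / (fact k * fact (k + m))"

definition Jb :: "nat \<Rightarrow> real \<Rightarrow> real" where
  "Jb m y = (\<Sum>k. cJ m k * y ^ k)"

lemma cJ_pos: "cJ m k > 0" by (simp add: cJ_def)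

lemma cJ_le: "cJ m k \<le> inverse (fact k)"
proof -
  have "1 \<le> (fact (k+m)::real)" by simp
  then show ?thesis unfolding cJ_def by (simp add: divide_simps)
qed

lemma summable_cJ: "summable (\<lambda>k. cJ m k * y ^ k)"
proof (rule summable_comparison_test[OF _ summable_exp[of "\<bar>y\<bar>"]])
  show "\<exists>N. \<forall>n\<ge>N. norm (cJ m n * y ^ n) \<le> inverse (fact n) * \<bar>y\<bar> ^ n"
  proof (intro exI[of _ 0] allI impI)
    fix n :: nat
    have "\<bar>cJ m n\<bar> = cJ m n" using cJ_pos[of m n] by simp
    then show "norm (cJ m n * y ^ n) \<le> inverse (fact n) * \<bar>y\<bar> ^ n"
      using cJ_le[of m n] by (simp add: abs_mult power_abs mult_right_mono)
  qed
qed

lemma sums_Jb: "(\<lambda>k. cJ m k * y ^ k) sums Jb m y"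
  unfolding Jb_def using summable_cJ by (rule summable_sums)

lemma diffs_cJ: "diffs (cJ m) = cJ (Suc m)"
proof
  fix n
  have "diffs (cJ m) n = of_nat (Suc n) / (fact (Suc n) * fact (Suc n + m))"
    by (simp add: diffs_def cJ_def)
  also have "\<dots> = cJ (Suc m) n"
    unfolding cJ_def by (simp add: field_simps del: fact_Suc) (simp add: algebra_simps)
  finally show "diffs (cJ m) n = cJ (Suc m) n" .
qed

lemma Jb_deriv: "(Jb m has_field_derivative Jb (Suc m) y) (at y)"
proof -
  have "((\<lambda>z. \<Sum>n. cJ m n * z^n) has_field_derivative (\<Sum>n. diffs (cJ m) n * y^n)) (at y)"
    by (rule termdiffs_strong'[where K="\<bar>y\<bar> + 1"]) (auto simp: summable_cJ)
  then show ?thesis by (simp add: diffs_cJ Jb_def[abs_def])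
qed

lemma Jb_deriv_chain[derivative_intros]:
  "(f has_field_derivative f') (at x within S) \<Longrightarrow>
   ((\<lambda>x. Jb m (f x)) has_field_derivative (Jb (Suc m) (f x) * f')) (at x within S)"
  using DERIV_chain2[OF Jb_deriv] by blast

lemma Jb_cont: "isCont (Jb m) y"
  using Jb_deriv DERIV_isCont by blast

lemma continuous_on_Jb: "continuous_on S (Jb m)"
  by (simp add: Jb_cont continuous_at_imp_continuous_on)

lemma Jb_measurable[measurable]: "Jb m \<in> borel_measurable borel"
  by (intro borel_measurable_continuous_onI continuous_on_Jb)

lemma Jb_ge: assumes "0 \<le> y" shows "cJ m 0 \<le> Jb m y"
proof -
  have "(\<Sum>k\<in>{0}. cJ m k * y ^ k) \<le> Jb m y"
    unfolding Jb_def using assms cJ_pos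
    by (intro sum_le_suminf summable_cJ) (auto intro!: mult_nonneg_nonneg simp: less_imp_le[OF cJ_pos])
  then show ?thesis by simp
qed

lemma Jb_pos: "0 \<le> y \<Longrightarrow> 0 < Jb m y"
  using Jb_ge[of y m] cJ_pos[of m 0] by linarith

lemma cJ_mono: "cJ (Suc m) k \<le> cJ m k"
  unfolding cJ_def by (auto simp: divide_simps intro!: mult_left_mono)

lemma Jb_mono: assumes "0 \<le> y" shows "Jb (Suc m) y \<le> Jb m y"
  unfolding Jb_def using assms
  by (intro suminf_le summable_cJ) (auto intro!: mult_right_mono cJ_mono)

lemma bessel_I_Jb: "bessel_I n z = (z/2)^n * Jb n ((z/2)^2)"
proof -
  have "(\<lambda>k. (z/2)^n * (cJ n k * ((z/2)^2)^k)) sums ((z/2)^n * Jb n ((z/2)^2))"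
    by (intro sums_mult sums_Jb)
  moreover have "(\<lambda>k. (z/2)^n * (cJ n k * ((z/2)^2)^k)) = (\<lambda>k. (z / 2) ^ (2 * k + n) / (fact k * fact (k + n)))"
  proof
    fix k
    have "((z/2)^2)^k = (z/2)^(2*k)" by (simp add: power_mult)
    then show "(z/2)^n * (cJ n k * ((z/2)^2)^k) = (z / 2) ^ (2 * k + n) / (fact k * fact (k + n))"
      by (simp add: cJ_def power_add)
  qed
  ultimately show ?thesis unfolding bessel_I_def by (simp add: sums_iff)
qed

lemma moment_nn:
  assumes "0 < s"
  shows "(\<integral>\<^sup>+x. ennreal (if 0 \<le> x then x^j * exp (-x/s) else 0) \<partial>lborel) = ennreal (fact j * s^(j+1))"
proof -
  have l: "0 < 1/s" using assms by simp
  have "(\<integral>\<^sup>+x. ennreal (if 0 \<le> x then x^j * exp (-x/s) else 0) \<partial>lborel)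
      = (\<integral>\<^sup>+x. ennreal s * ennreal (erlang_density 0 (1/s) x * x^j) \<partial>lborel)"
    using assms by (intro nn_integral_cong) (auto simp: erlang_density_def ennreal_mult'[symmetric])
  also have "\<dots> = ennreal s * (\<integral>\<^sup>+x. ennreal (erlang_density 0 (1/s) x * x^j) \<partial>lborel)"
    by (rule nn_integral_cmult) simp
  also have "\<dots> = ennreal s * ennreal (fact j / (1/s)^j)"
    using nn_integral_erlang_ith_moment[OF l, of 0 j] by simp
  also have "\<dots> = ennreal (fact j * s^(j+1))"
    using assms by (simp add: ennreal_mult'[symmetric] power_divide field_simps)
  finally show ?thesis .
qed

lemma Jb_nn_integral:
  assumes c: "0 \<le> c" and s: "0 < s"
  shows "(\<integral>\<^sup>+x. ennreal (if 0 \<le> x then x^n * exp (-x/s) * Jb m (c*x) else 0) \<partial>lborel)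
     = (\<Sum>k. ennreal (cJ m k * c^k * (fact (n+k) * s^(n+k+1))))"
proof -
  define t where "t k x = cJ m k * c^k * (if 0 \<le> x then x^(n+k) * exp (-x/s) else 0)" for k x
  have t_nn: "0 \<le> t k x" for k x
    unfolding t_def using c by (auto intro!: mult_nonneg_nonneg simp: less_imp_le[OF cJ_pos])
  have t_sum: "(\<lambda>k. t k x) sums (if 0 \<le> x then x^n * exp (-x/s) * Jb m (c*x) else 0)" for x
  proof (cases "0 \<le> x")
    case True
    have "(\<lambda>k. x^n * exp (-x/s) * (cJ m k * (c*x)^k)) sums (x^n * exp (-x/s) * Jb m (c*x))"
      by (intro sums_mult sums_Jb)
    moreover have "(\<lambda>k. x^n * exp (-x/s) * (cJ m k * (c*x)^k)) = (\<lambda>k. t k x)"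
      using True by (auto simp: t_def power_add power_mult_distrib)
    ultimately show ?thesis using True by simp
  qed (simp add: t_def)
  have "(\<integral>\<^sup>+x. ennreal (if 0 \<le> x then x^n * exp (-x/s) * Jb m (c*x) else 0) \<partial>lborel)
      = (\<integral>\<^sup>+x. (\<Sum>k. ennreal (t k x)) \<partial>lborel)"
    using t_sum t_nn by (intro nn_integral_cong) (simp add: suminf_ennreal2 sums_iff)
  also have "\<dots> = (\<Sum>k. \<integral>\<^sup>+x. ennreal (t k x) \<partial>lborel)"
    by (rule nn_integral_suminf[where f="\<lambda>k x. ennreal (t k x)"]) (simp add: t_def)
  also have "\<dots> = (\<Sum>k. ennreal (cJ m k * c^k * (fact (n+k) * s^(n+k+1))))"
  proof (rule suminf_cong)
    fix k
    have "(\<integral>\<^sup>+x. ennreal (t k x) \<partial>lborel) =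
        (\<integral>\<^sup>+x. ennreal (cJ m k * c^k) * ennreal (if 0 \<le> x then x^(n+k) * exp (-x/s) else 0) \<partial>lborel)"
      unfolding t_def using c
      by (intro nn_integral_cong) (auto simp: ennreal_mult'[symmetric] less_imp_le[OF cJ_pos])
    also have "\<dots> = ennreal (cJ m k * c^k) * (\<integral>\<^sup>+x. ennreal (if 0 \<le> x then x^(n+k) * exp (-x/s) else 0) \<partial>lborel)"
      by (rule nn_integral_cmult) simp
    also have "\<dots> = ennreal (cJ m k * c^k) * ennreal (fact (n+k) * s^(n+k+1))"
      using moment_nn[OF s] by simp
    also have "\<dots> = ennreal (cJ m k * c^k * (fact (n+k) * s^(n+k+1)))"
      using c s by (simp add: ennreal_mult'[symmetric] less_imp_le[OF cJ_pos])
    finally show "(\<integral>\<^sup>+x. ennreal (t k x) \<partial>lborel) = ennreal (cJ m k * c^k * (fact (n+k) * s^(n+k+1)))" .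
  qed
  finally show ?thesis .
qed

lemma fact_add_le: "(fact (n+k) :: real) \<le> fact n * fact k * 2^(n+k)"
proof -
  have "fact k * fact n * ((n+k) choose k) = (fact (n+k) :: nat)"
    using binomial_fact_lemma[of k "n+k"] by simp
  moreover have "((n+k) choose k) \<le> 2^(n+k)" by (rule binomial_le_pow2)
  ultimately have "(fact (n+k) :: nat) \<le> fact n * fact k * 2^(n+k)"
    by (metis mult.commute mult_le_mono2)
  then have "real (fact (n+k)) \<le> real (fact n * fact k * 2^(n+k))" by (simp only: of_nat_le_iff)
  then show ?thesis by simp
qed

lemma summable_Jb_terms:
  assumes c: "0 \<le> c" and s: "0 < s"
  shows "summable (\<lambda>k. cJ m k * c^k * (fact (n+k) * s^(n+k+1)))"
proof (rule summable_comparison_test)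
  have "summable (\<lambda>k. (2 * c * s)^k / fact k)" using summable_exp[of "2 * c * s"] by (simp add: divide_inverse mult.commute)
  then show "summable (\<lambda>k. fact n * 2^n * s^(n+1) * ((2 * c * s)^k / fact k))" by (rule summable_mult)
  show "\<exists>N. \<forall>k\<ge>N. norm (cJ m k * c^k * (fact (n+k) * s^(n+k+1))) \<le> fact n * 2^n * s^(n+1) * ((2 * c * s)^k / fact k)"
  proof (intro exI[of _ 0] allI impI)
    fix k
    have pos: "0 \<le> cJ m k * c^k * (fact (n+k) * s^(n+k+1))"
      using c s by (simp add: less_imp_le[OF cJ_pos])
    have cj: "cJ m k \<le> 1 / (fact k * fact k)"
      unfolding cJ_def by (auto simp: divide_simps intro!: mult_left_mono fact_mono)
    have "cJ m k * c^k * (fact (n+k) * s^(n+k+1)) \<le> 1 / (fact k * fact k) * c^k * ((fact n * fact k * 2^(n+k)) * s^(n+k+1))"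
      using c s cj fact_add_le[of n k]
      by (intro mult_mono mult_right_mono) (auto simp: less_imp_le[OF cJ_pos])
    also have "\<dots> = fact n * 2^n * s^(n+1) * ((2 * c * s)^k / fact k)"
      by (simp add: power_add power_mult_distrib field_simps)
    finally show "norm (cJ m k * c^k * (fact (n+k) * s^(n+k+1))) \<le> fact n * 2^n * s^(n+1) * ((2 * c * s)^k / fact k)"
      using pos by simp
  qed
qed

lemma Jb_fun_measurable[measurable]:
  "(\<lambda>x. if 0 \<le> x then x^n * exp (-x/s) * Jb m (c*x) else 0) \<in> borel_measurable lborel"
  by measurable

lemma Jb_has_integral_gen:
  assumes c: "0 \<le> c" and s: "0 < s"
  shows "has_bochner_integral lborel (\<lambda>x. if 0 \<le> x then x^n * exp (-x/s) * Jb m (c*x) else 0)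
           (\<Sum>k. cJ m k * c^k * (fact (n+k) * s^(n+k+1)))"
proof (rule has_bochner_integral_nn_integral)
  show "AE x in lborel. 0 \<le> (if 0 \<le> x then x^n * exp (-x/s) * Jb m (c*x) else 0)"
    using c by (auto intro!: mult_nonneg_nonneg less_imp_le[OF Jb_pos])
  show "0 \<le> (\<Sum>k. cJ m k * c^k * (fact (n+k) * s^(n+k+1)))"
    using c s by (intro suminf_nonneg summable_Jb_terms) (auto simp: less_imp_le[OF cJ_pos])
  show "(\<integral>\<^sup>+x. ennreal (if 0 \<le> x then x^n * exp (-x/s) * Jb m (c*x) else 0) \<partial>lborel) =
      ennreal (\<Sum>k. cJ m k * c^k * (fact (n+k) * s^(n+k+1)))"
    unfolding Jb_nn_integral[OF c s]
    using c s by (intro suminf_ennreal2 summable_Jb_terms) (auto simp: less_imp_le[OF cJ_pos])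
qed simp

lemma Jb_integrable:
  assumes c: "0 \<le> c" and s: "0 < s"
  shows "integrable lborel (\<lambda>x. if 0 \<le> x then x^n * exp (-x/s) * Jb m (c*x) else 0)"
  by (rule integrable.intros[OF Jb_has_integral_gen[OF assms]])

lemma Jb_integral:
  assumes c: "0 \<le> c" and s: "0 < s"
  shows "has_bochner_integral lborel (\<lambda>x. if 0 \<le> x then x^n * exp (-x/s) * Jb n (c*x) else 0)
           (s^(n+1) * exp (c * s))"
proof -
  have eq: "cJ n k * c^k * (fact (n+k) * s^(n+k+1)) = s^(n+1) * ((c * s)^k / fact k)" for k
    by (simp add: cJ_def power_add power_mult_distrib add.commute)
  have "(\<Sum>k. cJ n k * c^k * (fact (n+k) * s^(n+k+1))) = s^(n+1) * exp (c * s)"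
    unfolding eq using exp_converges[of "c * s"] by (simp add: sums_iff suminf_mult divide_inverse mult.commute)
  then show ?thesis using Jb_has_integral_gen[OF c s, of n n] by simp
qed

lemma Jb0_split: "Jb 0 y = Jb 1 y + y * Jb 2 y"
proof -
  define f where "f j = (if j = 0 then 0 else cJ 2 (j - 1) * y^j)" for j
  have "(\<lambda>j. f (Suc j)) sums (y * Jb 2 y)"
    using sums_mult[OF sums_Jb[of 2 y], of y] by (simp add: f_def algebra_simps)
  then have "f sums (y * Jb 2 y + f 0)" by (simp only: sums_Suc_iff)
  then have f: "f sums (y * Jb 2 y)" by (simp add: f_def)
  have "(\<lambda>j. cJ 1 j * y^j + f j) sums (Jb 1 y + y * Jb 2 y)"
    by (intro sums_add sums_Jb f)
  moreover have "(\<lambda>j. cJ 1 j * y^j + f j) = (\<lambda>j. cJ 0 j * y^j)"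
  proof
    fix j
    show "cJ 1 j * y^j + f j = cJ 0 j * y^j"
    proof (cases j)
      case 0 then show ?thesis by (simp add: f_def cJ_def)
    next
      case (Suc i)
      have H: "cJ 1 (Suc i) + cJ 2 i = cJ 0 (Suc i)"
        by (simp add: cJ_def field_simps del: fact_Suc) (simp add: algebra_simps)
      have "cJ 1 j * y^j + f j = (cJ 1 (Suc i) + cJ 2 i) * y^j" using Suc by (simp add: f_def algebra_simps)
      then show ?thesis using Suc H by simp
    qed
  qed
  ultimately show ?thesis using sums_Jb[of 0 y] sums_unique2 by metis
qed

definition pd :: "real \<Rightarrow> real \<Rightarrow> real \<Rightarrow> real" where
  "pd s lam x = (if 0 \<le> x then 1/s * exp (-(x+lam)/s) * Jb 0 (lam / s^2 * x) else 0)"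

definition q1 :: "real \<Rightarrow> real \<Rightarrow> real \<Rightarrow> real" where
  "q1 s lam x = (if 0 \<le> x then x/s^2 * (1/s * exp (-(x+lam)/s) * Jb 1 (lam / s^2 * x)) else 0)"

definition q2 :: "real \<Rightarrow> real \<Rightarrow> real \<Rightarrow> real" where
  "q2 s lam x = (if 0 \<le> x then (x/s^2)^2 * (1/s * exp (-(x+lam)/s) * Jb 2 (lam / s^2 * x)) else 0)"

definition rd :: "real \<Rightarrow> real \<Rightarrow> real \<Rightarrow> real" where
  "rd s lam x = (if 0 \<le> x then (x/s^2)^2 * (1/s * exp (-(x+lam)/s) * ((Jb 1 (lam / s^2 * x))^2 / Jb 0 (lam / s^2 * x))) else 0)"

definition hpp :: "real \<Rightarrow> real \<Rightarrow> real \<Rightarrow> real \<Rightarrow> real \<Rightarrow> real" where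
  "hpp s lam d1 d2 x = d2 * (-1/s + x/s^2 * (Jb 1 (lam / s^2 * x) / Jb 0 (lam / s^2 * x)))
     + d1^2 * ((x/s^2)^2 * (Jb 2 (lam / s^2 * x) / Jb 0 (lam / s^2 * x) - (Jb 1 (lam / s^2 * x) / Jb 0 (lam / s^2 * x))^2))"

lemma exp_split: "exp (-(x+lam)/s) = exp (-lam/s) * exp (-x/(s::real))"
proof (cases "s = 0")
  case False
  then have e: "-(x+lam)/s = -lam/s + -x/s" by (auto simp: divide_simps)
  show ?thesis unfolding e by (rule exp_add)
qed simp

lemma base_int:
  assumes s: "0 < s" and l: "0 \<le> lam"
  shows "has_bochner_integral lborel
     (\<lambda>x. exp (-lam/s) / s^(2*n+1) * (if 0 \<le> x then x^n * exp (-x/s) * Jb n (lam / s^2 * x) else 0))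
     (1 / s^n)"
proof -
  have c: "0 \<le> lam / s^2" using s l by simp
  have "has_bochner_integral lborel
     (\<lambda>x. exp (-lam/s) / s^(2*n+1) * (if 0 \<le> x then x^n * exp (-x/s) * Jb n (lam / s^2 * x) else 0))
     (exp (-lam/s) / s^(2*n+1) * (s^(n+1) * exp (lam / s^2 * s)))"
    by (intro has_bochner_integral_mult_right Jb_integral c s)
  moreover have "exp (-lam/s) / s^(2*n+1) * (s^(n+1) * exp (lam / s^2 * s)) = 1 / s^n"
  proof -
    have "exp (-lam/s) * exp (lam / s^2 * s) = 1" using s by (simp add: power2_eq_square exp_minus field_simps)
    moreover have "s^(2*n+1) = s^(n+1) * s^n" by (simp add: power_add mult_2)
    ultimately show ?thesis using s by (simp add: field_simps)
  qed
  ultimately show ?thesis by simp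
qed

lemma pd_int: "0 < s \<Longrightarrow> 0 \<le> lam \<Longrightarrow> has_bochner_integral lborel (pd s lam) 1"
proof -
  assume s: "0 < s" and l: "0 \<le> lam"
  have "pd s lam = (\<lambda>x. exp (-lam/s) / s^(2*0+1) * (if 0 \<le> x then x^0 * exp (-x/s) * Jb 0 (lam / s^2 * x) else 0))"
    unfolding pd_def exp_split by (auto simp: fun_eq_iff)
  then show ?thesis using base_int[OF s l, of 0] by simp
qed

lemma q1_int: "0 < s \<Longrightarrow> 0 \<le> lam \<Longrightarrow> has_bochner_integral lborel (q1 s lam) (1/s)"
proof -
  assume s: "0 < s" and l: "0 \<le> lam"
  have "q1 s lam = (\<lambda>x. exp (-lam/s) / s^(2*1+1) * (if 0 \<le> x then x^1 * exp (-x/s) * Jb 1 (lam / s^2 * x) else 0))"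
    unfolding q1_def exp_split using s by (auto simp: fun_eq_iff power2_eq_square eval_nat_numeral mult_ac)
  then show ?thesis using base_int[OF s l, of 1] by simp
qed

lemma q2_int: "0 < s \<Longrightarrow> 0 \<le> lam \<Longrightarrow> has_bochner_integral lborel (q2 s lam) (1/s^2)"
proof -
  assume s: "0 < s" and l: "0 \<le> lam"
  have "q2 s lam = (\<lambda>x. exp (-lam/s) / s^(2*2+1) * (if 0 \<le> x then x^2 * exp (-x/s) * Jb 2 (lam / s^2 * x) else 0))"
    unfolding q2_def exp_split using s by (auto simp: fun_eq_iff power2_eq_square eval_nat_numeral mult_ac)
  then show ?thesis using base_int[OF s l, of 2] by simp
qed

lemma rd_integrable:
  assumes s: "0 < s" and l: "0 \<le> lam"
  shows "integrable lborel (rd s lam)"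
proof (rule Bochner_Integration.integrable_bound)
  have c: "0 \<le> lam / s^2" using s l by simp
  show "integrable lborel (\<lambda>x. exp (-lam/s) / s^5 * (if 0 \<le> x then x^2 * exp (-x/s) * Jb 1 (lam / s^2 * x) else 0))"
    by (intro integrable_mult_right Jb_integrable c s)
  show "rd s lam \<in> borel_measurable lborel"
    unfolding rd_def by measurable
  show "AE x in lborel. norm (rd s lam x) \<le> norm (exp (-lam/s) / s^5 * (if 0 \<le> x then x^2 * exp (-x/s) * Jb 1 (lam / s^2 * x) else 0))"
  proof (rule AE_I2)
    fix x
    show "norm (rd s lam x) \<le> norm (exp (-lam/s) / s^5 * (if 0 \<le> x then x^2 * exp (-x/s) * Jb 1 (lam / s^2 * x) else 0))"
    proof (cases "0 \<le> x")
      case True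
      define y where "y = lam / s^2 * x"
      have y: "0 \<le> y" unfolding y_def by (rule mult_nonneg_nonneg[OF c True])
      have J0: "0 < Jb 0 y" using Jb_pos[OF y] .
      have J1: "0 < Jb 1 y" using Jb_pos[OF y] .
      have J10: "Jb 1 y \<le> Jb 0 y" using Jb_mono[OF y, of 0] by simp
      have fr: "(Jb 1 y)^2 / Jb 0 y \<le> Jb 1 y"
        using J0 J1 J10 by (simp add: power2_eq_square divide_simps mult_left_mono)
      have nn: "0 \<le> (Jb 1 y)^2 / Jb 0 y" using J0 by simp
      have "rd s lam x = exp (-lam/s) / s^5 * (x^2 * exp (-x/s) * ((Jb 1 y)^2 / Jb 0 y))"
        unfolding rd_def y_def exp_split using True s by (simp add: eval_nat_numeral field_simps)
      also have "\<dots> \<le> exp (-lam/s) / s^5 * (x^2 * exp (-x/s) * Jb 1 y)"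
        using fr s by (intro mult_left_mono) auto
      finally have le: "rd s lam x \<le> exp (-lam/s) / s^5 * (x^2 * exp (-x/s) * Jb 1 y)" .
      have "0 \<le> rd s lam x" unfolding rd_def y_def[symmetric] using True s nn
        by (simp only: if_True) (intro mult_nonneg_nonneg; simp)
      then have "norm (rd s lam x) \<le> exp (-lam/s) / s^5 * (x^2 * exp (-x/s) * Jb 1 y)" using le by simp
      also have "\<dots> \<le> norm (exp (-lam/s) / s^5 * (x^2 * exp (-x/s) * Jb 1 y))" unfolding real_norm_def by (rule abs_ge_self)
      finally show ?thesis using True by (simp add: y_def)
    next
      case False then show ?thesis by (simp add: rd_def)
    qed
  qed
qed

lemma alg_id:
  fixes J0 J1 J2 a b E d1 d2 :: real
  assumes "J0 \<noteq> 0"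
  shows "-(d2 * (-b + a * (J1/J0)) + d1^2 * (a^2 * (J2/J0 - (J1/J0)^2))) * (b * E * J0)
     = (d2 * b * (b * E * J0) - d2 * (a * (b * E * J1))) + d1^2 * (a^2 * (b * E * (J1^2/J0)) - a^2 * (b * E * J2))"
  using assms by (simp add: field_simps power2_eq_square)

lemma fisher1:
  assumes s: "0 < s" and l: "0 \<le> lam"
  shows "has_bochner_integral lborel (\<lambda>x. - hpp s lam d1 d2 x * pd s lam x)
           (d1^2 * (integral\<^sup>L lborel (rd s lam) - 1/s^2))"
proof -
  have eq: "(\<lambda>x. - hpp s lam d1 d2 x * pd s lam x) =
     (\<lambda>x. (d2/s * pd s lam x - d2 * q1 s lam x) + d1^2 * (rd s lam x - q2 s lam x))"
  proof
    fix x
    show "- hpp s lam d1 d2 x * pd s lam x = (d2/s * pd s lam x - d2 * q1 s lam x) + d1^2 * (rd s lam x - q2 s lam x)"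
    proof (cases "0 \<le> x")
      case True
      have "0 < Jb 0 (lam / s^2 * x)" using True s l by (intro Jb_pos) simp
      then show ?thesis using True
        unfolding hpp_def pd_def q1_def q2_def rd_def
        using alg_id[of "Jb 0 (lam / s^2 * x)" d2 "1/s" "x/s^2" "Jb 1 (lam / s^2 * x)" d1 "Jb 2 (lam / s^2 * x)" "exp (-(x+lam)/s)"]
        by (simp only: if_True minus_divide_left[symmetric] divide_inverse mult_1) simp
    qed (simp add: pd_def q1_def q2_def rd_def)
  qed
  have "has_bochner_integral lborel (\<lambda>x. (d2/s * pd s lam x - d2 * q1 s lam x) + d1^2 * (rd s lam x - q2 s lam x))
      ((d2/s * 1 - d2 * (1/s)) + d1^2 * (integral\<^sup>L lborel (rd s lam) - 1/s^2))"
    by (intro has_bochner_integral_add has_bochner_integral_diff has_bochner_integral_mult_right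
          pd_int q1_int q2_int s l has_bochner_integral_integrable rd_integrable)
  then show ?thesis unfolding eq by simp
qed

lemma bessel_at:
  assumes g: "0 < \<gamma>" and t: "0 < t"
  shows "\<gamma> * t * exp (- \<gamma> * (1 + t)) * bessel_I 0 (2 * \<gamma> * sqrt t) * (1 - (bessel_R (2 * \<gamma> * sqrt t))\<^sup>2)
    = \<gamma> * t * exp (- \<gamma> * (1 + t)) * (Jb 0 (\<gamma>^2 * t) - \<gamma>^2 * t * (Jb 1 (\<gamma>^2 * t))^2 / Jb 0 (\<gamma>^2 * t))"
proof -
  have h: "(2 * \<gamma> * sqrt t / 2) = \<gamma> * sqrt t" by simp
  have h2: "(\<gamma> * sqrt t)^2 = \<gamma>^2 * t" using t by (simp add: power_mult_distrib)
  have I0: "bessel_I 0 (2 * \<gamma> * sqrt t) = Jb 0 (\<gamma>^2 * t)"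
    unfolding bessel_I_Jb h h2 by simp
  have I1: "bessel_I 1 (2 * \<gamma> * sqrt t) = \<gamma> * sqrt t * Jb 1 (\<gamma>^2 * t)"
    unfolding bessel_I_Jb h h2 by simp
  have pos: "0 < Jb 0 (\<gamma>^2 * t)" using g t by (intro Jb_pos) simp
  have "(bessel_R (2 * \<gamma> * sqrt t))\<^sup>2 = \<gamma>^2 * t * (Jb 1 (\<gamma>^2 * t))^2 / (Jb 0 (\<gamma>^2 * t))^2"
    unfolding bessel_R_def I0 I1 using t by (simp add: power_divide power_mult_distrib)
  then show ?thesis unfolding I0 using pos by (simp add: field_simps power2_eq_square)
qed

definition P1 :: "real \<Rightarrow> real \<Rightarrow> real \<Rightarrow> real" where
  "P1 s lam x = (if 0 \<le> x then x/s * exp (-(x+lam)/s) * Jb 0 (lam / s^2 * x) else 0)"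

lemma P1_int:
  assumes s: "0 < s" and l: "0 \<le> lam"
  shows "has_bochner_integral lborel (P1 s lam) (s + lam)"
proof -
  have c: "0 \<le> lam / s^2" using s l by simp
  let ?E = "exp (-lam/s)"
  have eq: "P1 s lam = (\<lambda>x. ?E / s * (if 0 \<le> x then x^1 * exp (-x/s) * Jb 1 (lam / s^2 * x) else 0)
       + ?E * (lam / s^2) / s * (if 0 \<le> x then x^2 * exp (-x/s) * Jb 2 (lam / s^2 * x) else 0))"
  proof
    fix x
    show "P1 s lam x = ?E / s * (if 0 \<le> x then x^1 * exp (-x/s) * Jb 1 (lam / s^2 * x) else 0)
       + ?E * (lam / s^2) / s * (if 0 \<le> x then x^2 * exp (-x/s) * Jb 2 (lam / s^2 * x) else 0)"
      unfolding P1_def exp_split Jb0_split[of "lam / s^2 * x"]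
      using s by (simp add: field_simps power2_eq_square)
  qed
  have "has_bochner_integral lborel (P1 s lam) (?E / s * (s^(1+1) * exp (lam / s^2 * s)) + ?E * (lam / s^2) / s * (s^(2+1) * exp (lam / s^2 * s)))"
    unfolding eq by (intro has_bochner_integral_add has_bochner_integral_mult_right Jb_integral c s)
  moreover have "?E / s * (s^(1+1) * exp (lam / s^2 * s)) + ?E * (lam / s^2) / s * (s^(2+1) * exp (lam / s^2 * s)) = s + lam"
  proof -
    have "?E * exp (lam / s^2 * s) = 1" using s by (simp add: power2_eq_square exp_minus field_simps)
    then show ?thesis using s by (simp add: field_simps power2_eq_square eval_nat_numeral)
  qed
  ultimately show ?thesis by simp
qed

lemma gfun_eq:
  assumes s: "0 < s" and l: "0 < lam"
  shows "gfun (lam / s) = s / lam + 1 - s^2 * integral\<^sup>L lborel (rd s lam)"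
proof -
  define \<gamma> where "\<gamma> = lam / s"
  have g: "0 < \<gamma>" using s l by (simp add: \<gamma>_def)
  define G where "G t = indicator {0<..} t *\<^sub>R (\<gamma> * t * exp (- \<gamma> * (1 + t)) * bessel_I 0 (2 * \<gamma> * sqrt t)
                 * (1 - (bessel_R (2 * \<gamma> * sqrt t))\<^sup>2))" for t :: real
  have "gfun \<gamma> = integral\<^sup>L lborel G"
    unfolding gfun_def G_def set_lebesgue_integral_def by simp
  also have "\<dots> = \<bar>1/lam\<bar> *\<^sub>R integral\<^sup>L lborel (\<lambda>x. G (0 + 1/lam * x))"
    by (rule lborel_integral_real_affine) (use l in simp)
  also have "(\<lambda>x. G (0 + 1/lam * x)) = (\<lambda>x. P1 s lam x - lam * s^2 * rd s lam x)"
  proof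
    fix x :: real
    show "G (0 + 1/lam * x) = P1 s lam x - lam * s^2 * rd s lam x"
    proof (cases "0 < x")
      case True
      define t where "t = x / lam"
      have t: "0 < t" using True l by (simp add: t_def)
      have y: "\<gamma>^2 * t = lam / s^2 * x" using l by (simp add: \<gamma>_def t_def power2_eq_square field_simps)
      have gt: "\<gamma> * t = x / s" using l by (simp add: \<gamma>_def t_def field_simps)
      have ge: "- \<gamma> * (1 + t) = -(x+lam)/s" using l s by (simp add: \<gamma>_def t_def field_simps)
      have pos: "0 < Jb 0 (lam / s^2 * x)" using True l s by (intro Jb_pos) simp
      have "G (0 + 1/lam * x) = \<gamma> * t * exp (- \<gamma> * (1 + t)) * (Jb 0 (\<gamma>^2 * t) - \<gamma>^2 * t * (Jb 1 (\<gamma>^2 * t))^2 / Jb 0 (\<gamma>^2 * t))"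
        using bessel_at[OF g t] True l by (simp add: G_def t_def)
      also have "\<dots> = x / s * exp (-(x+lam)/s) * (Jb 0 (lam / s^2 * x) - lam / s^2 * x * (Jb 1 (lam / s^2 * x))^2 / Jb 0 (lam / s^2 * x))"
        unfolding y gt ge ..
      also have "\<dots> = P1 s lam x - lam * s^2 * rd s lam x"
        using True s pos by (simp add: P1_def rd_def field_simps power2_eq_square eval_nat_numeral)
      finally show ?thesis .
    next
      case False
      have "\<not> 0 < 1/lam * x" using False l by (simp add: zero_less_divide_iff)
      then have "G (0 + 1/lam * x) = 0" by (simp add: G_def)
      then show ?thesis using False by (cases "x = 0") (auto simp: P1_def rd_def)
    qed
  qed
  also have "integral\<^sup>L lborel (\<lambda>x. P1 s lam x - lam * s^2 * rd s lam x) = (s + lam) - lam * s^2 * integral\<^sup>L lborel (rd s lam)"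
  proof -
    have "has_bochner_integral lborel (\<lambda>x. P1 s lam x - lam * s^2 * rd s lam x) ((s + lam) - lam * s^2 * integral\<^sup>L lborel (rd s lam))"
      using l by (intro has_bochner_integral_diff has_bochner_integral_mult_right P1_int s
             has_bochner_integral_integrable rd_integrable) auto
    then show ?thesis by (rule has_bochner_integral_integral_eq)
  qed
  finally show ?thesis using l s by (simp add: \<gamma>_def field_simps)
qed

lemma sum_cos_zero:
  assumes L: "2 \<le> L"
  shows "(\<Sum>l<L. cos (psi L l + \<phi>)) = 0"
proof -
  define f where "f l = sin (2 * pi * real l / real L + \<phi> - pi / real L)" for l :: nat
  have Lp: "0 < real L" using L by simp
  have sp: "0 < sin (pi / real L)"
  proof (rule sin_gt_zero)
    show "0 < pi / real L" using Lp by simp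
    have "pi / real L \<le> pi / 2" using L pi_gt_zero by (intro divide_left_mono) auto
    then show "pi / real L < pi" using pi_gt_zero by linarith
  qed
  have step: "f (Suc l) - f l = 2 * sin (pi / real L) * cos (psi L l + \<phi>)" for l
  proof -
    have "f (Suc l) - f l = 2 * sin ((2 * pi * real (Suc l) / real L - 2 * pi * real l / real L) / 2)
        * cos ((2 * pi * real (Suc l) / real L + \<phi> - pi / real L + (2 * pi * real l / real L + \<phi> - pi / real L)) / 2)"
      unfolding f_def sin_diff_sin by (simp add: algebra_simps)
    also have "(2 * pi * real (Suc l) / real L - 2 * pi * real l / real L) / 2 = pi / real L"
      using Lp by (simp add: field_simps)
    also have "(2 * pi * real (Suc l) / real L + \<phi> - pi / real L + (2 * pi * real l / real L + \<phi> - pi / real L)) / 2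
        = psi L l + \<phi>"
      using Lp by (simp add: psi_def field_simps)
    finally show ?thesis .
  qed
  have "(\<Sum>l<L. f (Suc l) - f l) = f L - f 0" by (rule sum_lessThan_telescope)
  also have "f L = f 0"
  proof -
    have e1: "2 * pi * real L / real L + \<phi> - pi / real L = (\<phi> - pi / real L) + 2 * pi" using Lp by simp
    have e0: "2 * pi * real 0 / real L + \<phi> - pi / real L = \<phi> - pi / real L" by simp
    show ?thesis unfolding f_def e1 e0 by (rule sin_periodic)
  qed
  finally have "(\<Sum>l<L. 2 * sin (pi / real L) * cos (psi L l + \<phi>)) = 0" by (simp add: step)
  then have "2 * sin (pi / real L) * (\<Sum>l<L. cos (psi L l + \<phi>)) = 0" by (simp add: sum_distrib_left)
  then show ?thesis using sp by simp
qed

lemma Jb_Suc_Suc_0[simp]: "Jb (Suc (Suc 0)) = Jb 2"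
  by (simp add: numeral_2_eq_2)

lemma pd_pos: "0 < s \<Longrightarrow> 0 \<le> lam \<Longrightarrow> 0 \<le> x \<Longrightarrow> 0 < pd s lam x"
proof -
  assume s: "0 < s" and l: "0 \<le> lam" and x: "0 \<le> x"
  have J: "0 < Jb 0 (lam / s^2 * x)" using s l x by (intro Jb_pos) simp
  show ?thesis unfolding pd_def using x s J by simp
qed

lemma ln_pd: "0 < s \<Longrightarrow> 0 \<le> lam \<Longrightarrow> 0 \<le> x \<Longrightarrow>
   ln (pd s lam x) = ln (1/s) + (-(x+lam)/s) + ln (Jb 0 (lam / s^2 * x))"
proof -
  assume s: "0 < s" and l: "0 \<le> lam" and x: "0 \<le> x"
  have J: "0 < Jb 0 (lam / s^2 * x)" using s l x by (intro Jb_pos) simp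
  have "ln (1/s * exp (-(x+lam)/s) * Jb 0 (lam / s^2 * x)) = ln (1/s * exp (-(x+lam)/s)) + ln (Jb 0 (lam / s^2 * x))"
    using s J by (intro ln_mult_pos) auto
  also have "ln (1/s * exp (-(x+lam)/s)) = ln (1/s) + ln (exp (-(x+lam)/s))"
    using s by (intro ln_mult_pos) auto
  finally show ?thesis unfolding pd_def using x by simp
qed

lemma hp_deriv:
  assumes s: "0 < s" and x: "0 \<le> x"
    and lnn: "\<And>t. 0 \<le> lamf t"
    and D1: "\<And>t. (lamf has_real_derivative d1f t) (at t)"
  shows "((\<lambda>t. ln (pd s (lamf t) x)) has_real_derivative
           d1f t * (-1/s + x/s^2 * (Jb 1 (lamf t / s^2 * x) / Jb 0 (lamf t / s^2 * x)))) (at t)"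
proof -
  have pos: "0 < Jb 0 (lamf t / s^2 * x)" using lnn[of t] s x by (intro Jb_pos) simp
  have "((\<lambda>t. ln (1/s) + (-(x + lamf t)/s) + ln (Jb 0 (lamf t / s^2 * x))) has_real_derivative
      d1f t * (-1/s + x/s^2 * (Jb 1 (lamf t / s^2 * x) / Jb 0 (lamf t / s^2 * x)))) (at t)"
    using pos s by (auto intro!: derivative_eq_intros D1 simp: field_simps power2_eq_square)
  moreover have "(\<lambda>t. ln (pd s (lamf t) x)) = (\<lambda>t. ln (1/s) + (-(x + lamf t)/s) + ln (Jb 0 (lamf t / s^2 * x)))"
    using ln_pd[OF s lnn x] by auto
  ultimately show ?thesis by simp
qed

lemma hpp_deriv:
  assumes s: "0 < s" and x: "0 \<le> x"
    and lnn: "\<And>t. 0 \<le> lamf t"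
    and D1: "\<And>t. (lamf has_real_derivative d1f t) (at t)"
    and D2: "\<And>t. (d1f has_real_derivative d2f t) (at t)"
  shows "((\<lambda>t. d1f t * (-1/s + x/s^2 * (Jb 1 (lamf t / s^2 * x) / Jb 0 (lamf t / s^2 * x)))) has_real_derivative
           hpp s (lamf t) (d1f t) (d2f t) x) (at t)"
proof -
  have pos: "0 < Jb 0 (lamf t / s^2 * x)" using lnn[of t] s x by (intro Jb_pos) simp
  show ?thesis
    unfolding hpp_def using pos s
    by (auto intro!: derivative_eq_intros D1 D2 simp: field_simps power2_eq_square)
qed

lemma ncp_nonneg:
  assumes "0 < A" "0 < \<alpha>" "0 < \<beta>"
  shows "0 \<le> ncp A \<alpha> \<beta> L \<theta> l"
proof -
  have "-1 \<le> cos (psi L l + \<theta>)" by simp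
  then have "2 * \<alpha> * \<beta> * (-1) \<le> 2 * \<alpha> * \<beta> * cos (psi L l + \<theta>)" using assms by (intro mult_left_mono) auto
  moreover have "0 \<le> (\<alpha> - \<beta>)^2" by simp
  ultimately have "0 \<le> \<alpha>^2 + \<beta>^2 + 2 * \<alpha> * \<beta> * cos (psi L l + \<theta>)" by (simp add: power2_diff)
  then show ?thesis unfolding ncp_def using assms by simp
qed

lemma ncp_zero_sin:
  assumes "0 < A" "0 < \<alpha>" "0 < \<beta>" "ncp A \<alpha> \<beta> L \<theta> l = 0"
  shows "sin (psi L l + \<theta>) = 0"
proof -
  let ?c = "cos (psi L l + \<theta>)"
  have c1: "0 \<le> 1 + ?c" using cos_ge_minus_one[of "psi L l + \<theta>"] by linarith
  have e: "\<alpha>^2 + \<beta>^2 + 2 * \<alpha> * \<beta> * ?c = 0" using assms unfolding ncp_def by simp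
  have "(\<alpha> - \<beta>)^2 + 2 * \<alpha> * \<beta> * (1 + ?c) = 0" using e by (simp add: power2_diff algebra_simps)
  moreover have "0 \<le> 2 * \<alpha> * \<beta> * (1 + ?c)" using assms c1 by simp
  moreover have "0 \<le> (\<alpha> - \<beta>)^2" by simp
  ultimately have "2 * \<alpha> * \<beta> * (1 + ?c) = 0" by linarith
  then have "?c = -1" using assms by simp
  then have "(sin (psi L l + \<theta>))^2 = 0" using sin_cos_squared_add[of "psi L l + \<theta>"] by simp
  then show ?thesis by simp
qed

lemma ncp_deriv:
  "((\<lambda>t. ncp A \<alpha> \<beta> L t l) has_real_derivative (- 2 * A * \<alpha> * \<beta> * sin (psi L l + t))) (at t)"
  unfolding ncp_def by (auto intro!: derivative_eq_intros simp: algebra_simps)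

lemma d1_deriv:
  "((\<lambda>t. - 2 * A * \<alpha> * \<beta> * sin (psi L l + t)) has_real_derivative (- 2 * A * \<alpha> * \<beta> * cos (psi L l + t))) (at t)"
  by (auto intro!: derivative_eq_intros simp: algebra_simps)

lemma obs_eq:
  assumes A: "0 < A" and s2: "0 < \<sigma>2" and a: "0 < \<alpha>" and b: "0 < \<beta>"
  shows "obs_density A \<alpha> \<beta> \<sigma>2 L \<theta> l x = pd (A * \<sigma>2) (ncp A \<alpha> \<beta> L \<theta> l) x"
proof (cases "0 \<le> x")
  case True
  let ?l = "ncp A \<alpha> \<beta> L \<theta> l"
  have l: "0 \<le> ?l" by (rule ncp_nonneg[OF A a b])
  have s: "0 < A * \<sigma>2" using A s2 by simp
  have "(sqrt (?l * x) / (A * \<sigma>2 / 2) / 2)^2 = ?l / (A * \<sigma>2)^2 * x"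
    using l True s by (simp add: power_divide)
  then have "bessel_I 0 (sqrt (?l * x) / (A * \<sigma>2 / 2)) = Jb 0 (?l / (A * \<sigma>2)^2 * x)"
    unfolding bessel_I_Jb by simp
  then show ?thesis using True unfolding obs_density_def pd_def by simp
qed (simp add: obs_density_def pd_def)

theorem theorem1:
  fixes L :: nat and A \<alpha> \<beta> \<sigma>2 \<phi> :: real
  assumes "L \<ge> 2" and "A > 0" and "\<alpha> > 0" and "\<beta> > 0" and "\<sigma>2 > 0"
    and "0 \<le> \<phi>" and "\<phi> < 2 * pi"
  shows "1 / CRLB A \<alpha> \<beta> \<sigma>2 L \<phi> =
    (let K = 2 * \<alpha> * \<beta> / (\<alpha>\<^sup>2 + \<beta>\<^sup>2);
         \<gamma>bar = (\<Sum>l<L. snr \<alpha> \<beta> \<sigma>2 L \<phi> l) / real L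
     in K\<^sup>2 * \<gamma>bar\<^sup>2 * (\<Sum>l<L. (sin (psi L l + \<phi>))\<^sup>2
           * (1 / snr \<alpha> \<beta> \<sigma>2 L \<phi> l - gfun (snr \<alpha> \<beta> \<sigma>2 L \<phi> l))))"
proof -
  note L = assms(1) and A = assms(2) and a = assms(3) and b = assms(4) and s2 = assms(5)
  define s where "s = A * \<sigma>2"
  have s: "0 < s" using A s2 by (simp add: s_def)
  define lam where "lam l \<theta> = ncp A \<alpha> \<beta> L \<theta> l" for l \<theta>
  define d1 where "d1 l \<theta> = - 2 * A * \<alpha> * \<beta> * sin (psi L l + \<theta>)" for l \<theta>
  define d2 where "d2 l \<theta> = - 2 * A * \<alpha> * \<beta> * cos (psi L l + \<theta>)" for l \<theta>
  have lnn: "0 \<le> lam l \<theta>" for l \<theta> unfolding lam_def by (rule ncp_nonneg[OF A a b])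
  have D1: "(lam l has_real_derivative d1 l t) (at t)" for l t
    using ncp_deriv[of A \<alpha> \<beta> L l t] unfolding lam_def d1_def by simp
  have D2: "(d1 l has_real_derivative d2 l t) (at t)" for l t
    using d1_deriv[of A \<alpha> \<beta> L l t] unfolding d1_def d2_def by simp
  define hp where "hp l z = hpp s (lam l \<phi>) (d1 l \<phi>) (d2 l \<phi>) z" for l z
  define p where "p l z = pd s (lam l \<phi>) z" for l z
  define Gf where "Gf l m z = (if m = l then - hp l z * p l z else p m z)" for l m :: nat and z
  define H1 where "H1 x l t = d1 l t * (-1/s + x l/s^2 * (Jb 1 (lam l t / s^2 * x l) / Jb 0 (lam l t / s^2 * x l)))"
    for x :: "nat \<Rightarrow> real" and l t
  have joint: "joint_density A \<alpha> \<beta> \<sigma>2 L \<theta> x = (\<Prod>l<L. pd s (lam l \<theta>) (x l))" for \<theta> x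
    unfolding joint_density_def lam_def s_def using obs_eq[OF A s2 a b] by simp
  have integrand: "- deriv (deriv (\<lambda>\<theta>. ln (joint_density A \<alpha> \<beta> \<sigma>2 L \<theta> x))) \<phi> * joint_density A \<alpha> \<beta> \<sigma>2 L \<phi> x
      = (\<Sum>l<L. \<Prod>m<L. Gf l m (x m))" for x
  proof -
    have prodG: "(\<Prod>m<L. Gf l m (x m)) = - hp l (x l) * (\<Prod>m<L. p m (x m))" if "l < L" for l
    proof -
      have "(\<Prod>m<L. Gf l m (x m)) = (\<Prod>m<L. (if m = l then - hp l (x l) else 1) * p m (x m))"
        by (intro prod.cong) (auto simp: Gf_def)
      also have "\<dots> = (\<Prod>m<L. (if m = l then - hp l (x l) else 1)) * (\<Prod>m<L. p m (x m))"
        by (rule prod.distrib)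
      also have "(\<Prod>m<L. (if m = l then - hp l (x l) else 1)) = - hp l (x l)"
        using that by simp
      finally show ?thesis .
    qed
    have rhs: "(\<Sum>l<L. \<Prod>m<L. Gf l m (x m)) = - (\<Sum>l<L. hp l (x l)) * (\<Prod>m<L. p m (x m))"
      by (simp add: prodG sum_distrib_right sum_negf)
    have jp: "joint_density A \<alpha> \<beta> \<sigma>2 L \<phi> x = (\<Prod>m<L. p m (x m))"
      unfolding joint p_def ..
    show ?thesis
    proof (cases "\<forall>l<L. 0 \<le> x l")
      case False
      then obtain k where k: "k < L" "x k < 0" by auto
      have "(\<Prod>m<L. p m (x m)) = 0"
        using k by (intro prod_zero) (auto intro!: bexI[of _ k] simp: p_def pd_def)
      then show ?thesis unfolding rhs jp by simp
    next
      case True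
      have lnj: "(\<lambda>\<theta>. ln (joint_density A \<alpha> \<beta> \<sigma>2 L \<theta> x)) = (\<lambda>\<theta>. \<Sum>l<L. ln (pd s (lam l \<theta>) (x l)))"
      proof
        fix \<theta>
        show "ln (joint_density A \<alpha> \<beta> \<sigma>2 L \<theta> x) = (\<Sum>l<L. ln (pd s (lam l \<theta>) (x l)))"
          unfolding joint
        proof (intro ln_prod)
          fix l assume "l \<in> {..<L}"
          then have "0 < pd s (lam l \<theta>) (x l)" using True s lnn by (intro pd_pos) auto
          then show "pd s (lam l \<theta>) (x l) \<noteq> 0" by simp
        qed simp
      qed
      have dd1: "((\<lambda>\<theta>. \<Sum>l<L. ln (pd s (lam l \<theta>) (x l))) has_real_derivative (\<Sum>l<L. H1 x l t)) (at t)" for t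
        unfolding H1_def using True
        by (intro DERIV_sum hp_deriv[OF s _ lnn D1]) auto
      have deq: "deriv (\<lambda>\<theta>. ln (joint_density A \<alpha> \<beta> \<sigma>2 L \<theta> x)) = (\<lambda>t. \<Sum>l<L. H1 x l t)"
        unfolding lnj using dd1 by (intro ext DERIV_imp_deriv)
      have dd2: "((\<lambda>t. \<Sum>l<L. H1 x l t) has_real_derivative (\<Sum>l<L. hp l (x l))) (at \<phi>)"
        unfolding H1_def hp_def using True
        by (intro DERIV_sum hpp_deriv[OF s _ lnn D1 D2]) auto
      have "deriv (deriv (\<lambda>\<theta>. ln (joint_density A \<alpha> \<beta> \<sigma>2 L \<theta> x))) \<phi> = (\<Sum>l<L. hp l (x l))"
        unfolding deq using dd2 by (rule DERIV_imp_deriv)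
      then show ?thesis unfolding rhs jp by simp
    qed
  qed
  define Id where "Id l = integral\<^sup>L lborel (rd s (lam l \<phi>))" for l
  have Gint: "has_bochner_integral lborel (Gf l m) (if m = l then (d1 l \<phi>)^2 * (Id l - 1/s^2) else 1)" for l m
  proof (cases "m = l")
    case True
    have "Gf l m = (\<lambda>z. - hpp s (lam l \<phi>) (d1 l \<phi>) (d2 l \<phi>) z * pd s (lam l \<phi>) z)"
      using True by (auto simp: Gf_def hp_def p_def)
    then show ?thesis using True fisher1[OF s lnn] by (simp add: Id_def)
  next
    case False
    have "Gf l m = pd s (lam m \<phi>)" using False by (auto simp: Gf_def p_def)
    then show ?thesis using False pd_int[OF s lnn] by simp
  qed
  have intG: "integrable lborel (Gf l m)" for l m by (rule integrable.intros[OF Gint])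
  interpret product_sigma_finite "\<lambda>_::nat. lborel :: real measure" by standard
  have FI: "fisher_info A \<alpha> \<beta> \<sigma>2 L \<phi> = (\<Sum>l<L. (d1 l \<phi>)^2 * (Id l - 1/s^2))"
  proof -
    have "fisher_info A \<alpha> \<beta> \<sigma>2 L \<phi> = integral\<^sup>L (PiM {..<L} (\<lambda>_. lborel)) (\<lambda>x. \<Sum>l<L. \<Prod>m<L. Gf l m (x m))"
      unfolding fisher_info_def integrand ..
    also have "\<dots> = (\<Sum>l<L. integral\<^sup>L (PiM {..<L} (\<lambda>_. lborel)) (\<lambda>x. \<Prod>m<L. Gf l m (x m)))"
      by (rule Bochner_Integration.integral_sum[where f="\<lambda>l x. \<Prod>m<L. Gf l m (x m)"])
         (rule product_integrable_prod, simp, rule intG)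
    also have "\<dots> = (\<Sum>l<L. \<Prod>m<L. integral\<^sup>L lborel (Gf l m))"
      by (intro sum.cong refl product_integral_prod finite_lessThan intG)
    also have "\<dots> = (\<Sum>l<L. \<Prod>m<L. (if m = l then (d1 l \<phi>)^2 * (Id l - 1/s^2) else 1))"
      by (intro sum.cong prod.cong refl has_bochner_integral_integral_eq Gint)
    also have "\<dots> = (\<Sum>l<L. (d1 l \<phi>)^2 * (Id l - 1/s^2))"
      by (intro sum.cong refl) simp
    finally show ?thesis .
  qed
  have Lp: "0 < real L" using L by simp
  have gbar: "(\<Sum>l<L. snr \<alpha> \<beta> \<sigma>2 L \<phi> l) / real L = (\<alpha>^2 + \<beta>^2) / \<sigma>2"
  proof -
    have "(\<Sum>l<L. snr \<alpha> \<beta> \<sigma>2 L \<phi> l) = (\<Sum>l<L. (\<alpha>^2 + \<beta>^2) + 2 * \<alpha> * \<beta> * cos (psi L l + \<phi>)) / \<sigma>2"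
      unfolding snr_def by (simp add: sum_divide_distrib)
    also have "\<dots> = (real L * (\<alpha>^2 + \<beta>^2) + 2 * \<alpha> * \<beta> * (\<Sum>l<L. cos (psi L l + \<phi>))) / \<sigma>2"
      by (simp add: sum.distrib sum_distrib_left)
    also have "\<dots> = real L * (\<alpha>^2 + \<beta>^2) / \<sigma>2" using sum_cos_zero[OF L] by simp
    finally show ?thesis using Lp by simp
  qed
  have Kg: "(2 * \<alpha> * \<beta> / (\<alpha>\<^sup>2 + \<beta>\<^sup>2))\<^sup>2 * ((\<alpha>^2 + \<beta>^2) / \<sigma>2)\<^sup>2 = (2 * \<alpha> * \<beta> / \<sigma>2)^2"
  proof -
    have "0 < \<alpha>\<^sup>2 + \<beta>\<^sup>2" using a by (simp add: add_pos_nonneg)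
    then have "2 * \<alpha> * \<beta> / (\<alpha>\<^sup>2 + \<beta>\<^sup>2) * ((\<alpha>^2 + \<beta>^2) / \<sigma>2) = 2 * \<alpha> * \<beta> / \<sigma>2" by simp
    then show ?thesis by (metis power_mult_distrib)
  qed
  have trm: "(d1 l \<phi>)^2 * (Id l - 1/s^2) = (2 * \<alpha> * \<beta> / \<sigma>2)^2 * ((sin (psi L l + \<phi>))\<^sup>2
           * (1 / snr \<alpha> \<beta> \<sigma>2 L \<phi> l - gfun (snr \<alpha> \<beta> \<sigma>2 L \<phi> l)))" for l
  proof -
    have snr: "snr \<alpha> \<beta> \<sigma>2 L \<phi> l = lam l \<phi> / s"
      unfolding snr_def lam_def ncp_def s_def using A by simp
    show ?thesis
    proof (cases "lam l \<phi> = 0")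
      case True
      then have "sin (psi L l + \<phi>) = 0" unfolding lam_def by (rule ncp_zero_sin[OF A a b])
      then show ?thesis by (simp add: d1_def)
    next
      case False
      then have lp: "0 < lam l \<phi>" using lnn[of l \<phi>] by simp
      have e: "1 / snr \<alpha> \<beta> \<sigma>2 L \<phi> l - gfun (snr \<alpha> \<beta> \<sigma>2 L \<phi> l) = s^2 * Id l - 1"
        unfolding snr gfun_eq[OF s lp] Id_def by simp
      show ?thesis unfolding e using A s2 unfolding d1_def s_def by (simp add: field_simps power2_eq_square)
    qed
  qed
  show ?thesis
    unfolding CRLB_def Let_def gbar Kg
    by (simp add: FI sum_distrib_left trm)
qed

end
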